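(* Fix integers $m\ge 1$ and $\theta\in(0,1]$, and let $f$ be a homogeneous voting rule. Suppose there is a neighborhood $U$ of the expected normalized profile $\hat P$ (in the space of normalized continuous profiles on $\{1,\dots,m\}$, with the topology of weight vectors in $\mathbb R^{m!}$) such that $f$ is unison-manipulable (UM) in every continuous profile of $U$. Then $\lim_{n\to\infty}\rho(f,m,n,\theta)=1$.
   Context: A ranking over a finite candidate set is a strict total order on it. A discrete profile $P$ consists of a finite nonempty candidate set, a finite nonempty voter set of size $n$, and a ranking $P_v$ for each voter $v$; $w(p,P)$ is the number of voters with ranking $p$, $w(P)=n$. A continuous profile consists of a candidate set, a total weight $w(P)>0$ and weights $w(p,P)\ge0$ for each ranking $p$ summing to $w(P)$. The normalized profile $\bar P$ has weights $w(p,P)/w(P)$. Profiles on a fixed candidate set are identified with their weight vectors in $\mathbb R^{m!}$. A voting rule maps every profile (discrete or continuous) to one of its candidates; it is homogeneous if $f(P)=f(\bar P)$ always. CM (discrete): $f$ is CM in discrete $P$ if there is a discrete $Q$ with the same candidates and voters, $f(Q)\ne f(P)$, and every voter $v$ with $Q_v\ne P_v$ prefers $f(Q)$ to $f(P)$ according to $P_v$. UM: $f$ is unison-manipulable in a (discrete or continuous) profile $P$ if there exist a candidate $c\ne f(P)$ and a ranking $q$ such that, in the profile $Q$ obtained from $P$ by moving all the weight of the rankings that prefer $c$ to $f(P)$ onto the single ranking $q$ (other weights unchanged), $f(Q)=c$. Perturbed Culture with parameters $m,n\ge1$ and $\theta\in(0,1]$: a random discrete profile with candidates $\{1,\dots,m\}$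 and voters $\{1,\dots,n\}$, each voter independently having ranking $1\succ\cdots\succ m$ with probability $\theta$ and a uniformly random ranking with probability $1-\theta$. The expected normalized profile $\hat P$ has total weight $1$, weight $\theta+\frac{1-\theta}{m!}$ on $1\succ\cdots\succ m$ and $\frac{1-\theta}{m!}$ on every other ranking. The CM rate $\rho(f,m,n,\theta)$ is the probability that $f$ is CM (in the discrete sense) in a profile drawn from this model. *)

theory Defs
  imports "HOL-Analysis.Analysis"
begin

text \<open>A ranking is a list of the candidates without repetition,
  best candidate first. Profiles on candidate set 1..m are weight vectors
  indexed by rankings (functions nat list => real vanishing outside rankings).\<close>

definition rankings :: "nat \<Rightarrow> nat list set" where
  "rankings m = {p. distinct p \<and> set p = {1..m}}"

definition prefers :: "nat list \<Rightarrow> nat \<Rightarrow> nat \<Rightarrow> bool" where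
  "prefers p a b \<longleftrightarrow> (\<exists>i j. i < j \<and> j < length p \<and> p ! i = a \<and> p ! j = b)"

definition total_weight :: "nat \<Rightarrow> (nat list \<Rightarrow> real) \<Rightarrow> real" where
  "total_weight m w = (\<Sum>p\<in>rankings m. w p)"

definition cprofile :: "nat \<Rightarrow> (nat list \<Rightarrow> real) \<Rightarrow> bool" where
  "cprofile m w \<longleftrightarrow> (\<forall>p\<in>rankings m. w p \<ge> 0) \<and> (\<forall>p. p \<notin> rankings m \<longrightarrow> w p = 0)
     \<and> total_weight m w > 0"

definition normalize :: "nat \<Rightarrow> (nat list \<Rightarrow> real) \<Rightarrow> (nat list \<Rightarrow> real)" where
  "normalize m w = (\<lambda>p. w p / total_weight m w)"

definition normalized_profile :: "nat \<Rightarrow> (nat list \<Rightarrow> real) \<Rightarrow> bool" where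
  "normalized_profile m w \<longleftrightarrow> cprofile m w \<and> total_weight m w = 1"

definition voting_rule :: "nat \<Rightarrow> ((nat list \<Rightarrow> real) \<Rightarrow> nat) \<Rightarrow> bool" where
  "voting_rule m f \<longleftrightarrow> (\<forall>w. cprofile m w \<longrightarrow> f w \<in> {1..m})"

definition homogeneous :: "nat \<Rightarrow> ((nat list \<Rightarrow> real) \<Rightarrow> nat) \<Rightarrow> bool" where
  "homogeneous m f \<longleftrightarrow> (\<forall>w. cprofile m w \<longrightarrow> f w = f (normalize m w))"

definition dprofiles :: "nat \<Rightarrow> nat \<Rightarrow> (nat \<Rightarrow> nat list) set" where
  "dprofiles m n = PiE {1..n} (\<lambda>_. rankings m)"

definition dweights :: "nat \<Rightarrow> (nat \<Rightarrow> nat list) \<Rightarrow> (nat list \<Rightarrow> real)" where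
  "dweights n P = (\<lambda>p. real (card {v\<in>{1..n}. P v = p}))"

definition CM :: "nat \<Rightarrow> nat \<Rightarrow> ((nat list \<Rightarrow> real) \<Rightarrow> nat) \<Rightarrow> (nat \<Rightarrow> nat list) \<Rightarrow> bool" where
  "CM m n f P \<longleftrightarrow> (\<exists>Q\<in>dprofiles m n.
      f (dweights n Q) \<noteq> f (dweights n P) \<and>
      (\<forall>v\<in>{1..n}. Q v \<noteq> P v \<longrightarrow> prefers (P v) (f (dweights n Q)) (f (dweights n P))))"

definition unison_move :: "nat \<Rightarrow> (nat list \<Rightarrow> real) \<Rightarrow> nat \<Rightarrow> nat \<Rightarrow> nat list \<Rightarrow> (nat list \<Rightarrow> real)" where
  "unison_move m w b c q = (\<lambda>p.
      (if prefers p c b then 0 else w p) +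
      (if p = q then (\<Sum>r\<in>{r\<in>rankings m. prefers r c b}. w r) else 0))"

definition UM :: "nat \<Rightarrow> ((nat list \<Rightarrow> real) \<Rightarrow> nat) \<Rightarrow> (nat list \<Rightarrow> real) \<Rightarrow> bool" where
  "UM m f w \<longleftrightarrow> (\<exists>c\<in>{1..m}. \<exists>q\<in>rankings m.
      c \<noteq> f w \<and> f (unison_move m w (f w) c q) = c)"

definition identity_ranking :: "nat \<Rightarrow> nat list" where
  "identity_ranking m = [1..<m+1]"

text \<open>Expected normalized profile of Perturbed Culture.\<close>
definition hatP :: "nat \<Rightarrow> real \<Rightarrow> (nat list \<Rightarrow> real)" where
  "hatP m \<theta> = (\<lambda>p. if p \<in> rankings m then
       (if p = identity_ranking m then \<theta> else 0) + (1 - \<theta>) / fact m else 0)"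

text \<open>Probability that a single voter has ranking p under Perturbed Culture.\<close>
definition pc_prob :: "nat \<Rightarrow> real \<Rightarrow> nat list \<Rightarrow> real" where
  "pc_prob m \<theta> p = (if p = identity_ranking m then \<theta> else 0) + (1 - \<theta>) / fact m"

definition CM_rate :: "((nat list \<Rightarrow> real) \<Rightarrow> nat) \<Rightarrow> nat \<Rightarrow> nat \<Rightarrow> real \<Rightarrow> real" where
  "CM_rate f m n \<theta> = (\<Sum>P\<in>{P\<in>dprofiles m n. CM m n f P}. \<Prod>v\<in>{1..n}. pc_prob m \<theta> (P v))"

end

theory Submission imports Defs "HOL-Combinatorics.Multiset_Permutations" begin

lemma sum_PiE_single:
  fixes pc g :: "'b \<Rightarrow> real" and V :: "'a set"
  assumes "finite V" "finite R" "v \<in> V" "sum pc R = 1"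
  shows "(\<Sum>P\<in>PiE V (\<lambda>_. R). (\<Prod>u\<in>V. pc (P u)) * g (P v)) = (\<Sum>y\<in>R. pc y * g y)"
proof -
  define k where "k u y = (if u = v then pc y * g y else pc y)" for u y
  have eq: "(\<Prod>u\<in>V. pc (P u)) * g (P v) = (\<Prod>u\<in>V. k u (P u))" for P :: "'a \<Rightarrow> 'b"
  proof -
    have "(\<Prod>u\<in>V. k u (P u)) = k v (P v) * (\<Prod>u\<in>V-{v}. k u (P u))"
      using assms by (simp add: prod.remove)
    also have "(\<Prod>u\<in>V-{v}. k u (P u)) = (\<Prod>u\<in>V-{v}. pc (P u))" by (simp add: k_def)
    also have "(\<Prod>u\<in>V. pc (P u)) = pc (P v) * (\<Prod>u\<in>V-{v}. pc (P u))"
      using assms by (simp add: prod.remove)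
    ultimately show ?thesis by (simp add: k_def)
  qed
  have "(\<Sum>P\<in>PiE V (\<lambda>_. R). (\<Prod>u\<in>V. pc (P u)) * g (P v)) = (\<Sum>P\<in>PiE V (\<lambda>_. R). \<Prod>u\<in>V. k u (P u))"
    by (simp add: eq)
  also have "\<dots> = (\<Prod>u\<in>V. \<Sum>y\<in>R. k u y)" using prod_sum_PiE[of V "\<lambda>_. R" k] assms by simp
  also have "\<dots> = (\<Sum>y\<in>R. k v y) * (\<Prod>u\<in>V-{v}. \<Sum>y\<in>R. k u y)" using assms by (simp add: prod.remove)
  also have "(\<Prod>u\<in>V-{v}. \<Sum>y\<in>R. k u y) = 1" using assms by (simp add: k_def)
  finally show ?thesis by (simp add: k_def)
qed

lemma sum_PiE_pair:
  fixes pc g h :: "'b \<Rightarrow> real" and V :: "'a set"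
  assumes "finite V" "finite R" "v \<in> V" "w \<in> V" "v \<noteq> w" "sum pc R = 1"
  shows "(\<Sum>P\<in>PiE V (\<lambda>_. R). (\<Prod>u\<in>V. pc (P u)) * (g (P v) * h (P w)))
     = (\<Sum>y\<in>R. pc y * g y) * (\<Sum>y\<in>R. pc y * h y)"
proof -
  define k where "k u y = (if u = v then pc y * g y else if u = w then pc y * h y else pc y)" for u y
  have eq: "(\<Prod>u\<in>V. pc (P u)) * (g (P v) * h (P w)) = (\<Prod>u\<in>V. k u (P u))" for P :: "'a \<Rightarrow> 'b"
  proof -
    have w': "w \<in> V - {v}" using assms by simp
    have "(\<Prod>u\<in>V. k u (P u)) = k v (P v) * (\<Prod>u\<in>V-{v}. k u (P u))"
      using assms by (simp add: prod.remove)
    also have "(\<Prod>u\<in>V-{v}. k u (P u)) = k w (P w) * (\<Prod>u\<in>V-{v}-{w}. k u (P u))"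
      using assms w' by (intro prod.remove) auto
    finally have "(\<Prod>u\<in>V. k u (P u)) = k v (P v) * (k w (P w) * (\<Prod>u\<in>V-{v}-{w}. k u (P u)))" .
    also have "(\<Prod>u\<in>V-{v}-{w}. k u (P u)) = (\<Prod>u\<in>V-{v}-{w}. pc (P u))" by (simp add: k_def)
    moreover have "(\<Prod>u\<in>V. pc (P u)) = pc (P v) * (\<Prod>u\<in>V-{v}. pc (P u))"
      using assms by (simp add: prod.remove)
    moreover have "(\<Prod>u\<in>V-{v}. pc (P u)) = pc (P w) * (\<Prod>u\<in>V-{v}-{w}. pc (P u))"
      using assms w' by (intro prod.remove) auto
    ultimately show ?thesis using assms by (simp add: k_def)
  qed
  have "(\<Sum>P\<in>PiE V (\<lambda>_. R). (\<Prod>u\<in>V. pc (P u)) * (g (P v) * h (P w))) = (\<Sum>P\<in>PiE V (\<lambda>_. R). \<Prod>u\<in>V. k u (P u))"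
    by (simp add: eq)
  also have "\<dots> = (\<Prod>u\<in>V. \<Sum>y\<in>R. k u y)" using prod_sum_PiE[of V "\<lambda>_. R" k] assms by simp
  also have "\<dots> = (\<Sum>y\<in>R. k v y) * ((\<Sum>y\<in>R. k w y) * (\<Prod>u\<in>V-{v}-{w}. \<Sum>y\<in>R. k u y))"
  proof -
    have w': "w \<in> V - {v}" using assms by simp
    show ?thesis using assms w' prod.remove[of V v "\<lambda>u. \<Sum>y\<in>R. k u y"]
       prod.remove[of "V-{v}" w "\<lambda>u. \<Sum>y\<in>R. k u y"] by simp
  qed
  also have "(\<Prod>u\<in>V-{v}-{w}. \<Sum>y\<in>R. k u y) = 1" using assms by (simp add: k_def)
  finally show ?thesis using assms by (simp add: k_def)
qed

lemma sum_PiE_var: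
  fixes pc h :: "'b \<Rightarrow> real" and V :: "'a set"
  assumes "finite V" "finite R" "sum pc R = 1" "(\<Sum>y\<in>R. pc y * h y) = 0"
  shows "(\<Sum>P\<in>PiE V (\<lambda>_. R). (\<Prod>u\<in>V. pc (P u)) * (\<Sum>v\<in>V. h (P v))^2)
     = real (card V) * (\<Sum>y\<in>R. pc y * (h y)^2)"
proof -
  have "(\<Sum>P\<in>PiE V (\<lambda>_. R). (\<Prod>u\<in>V. pc (P u)) * (\<Sum>v\<in>V. h (P v))^2)
     = (\<Sum>P\<in>PiE V (\<lambda>_. R). \<Sum>v\<in>V. \<Sum>w\<in>V. (\<Prod>u\<in>V. pc (P u)) * (h (P v) * h (P w)))"
  proof (intro sum.cong refl)
    fix P :: "'a \<Rightarrow> 'b"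
    have "(\<Sum>v\<in>V. h (P v))^2 = (\<Sum>v\<in>V. \<Sum>w\<in>V. h (P v) * h (P w))"
      by (simp add: power2_eq_square sum_product)
    then show "(\<Prod>u\<in>V. pc (P u)) * (\<Sum>v\<in>V. h (P v))^2 = (\<Sum>v\<in>V. \<Sum>w\<in>V. (\<Prod>u\<in>V. pc (P u)) * (h (P v) * h (P w)))"
      by (simp add: sum_distrib_left)
  qed
  also have "\<dots> = (\<Sum>v\<in>V. \<Sum>w\<in>V. \<Sum>P\<in>PiE V (\<lambda>_. R). (\<Prod>u\<in>V. pc (P u)) * (h (P v) * h (P w)))"
    by (simp add: sum.swap[of _ "PiE V (\<lambda>_. R)"])
  also have "\<dots> = (\<Sum>v\<in>V. \<Sum>w\<in>V. if w = v then (\<Sum>y\<in>R. pc y * (h y)^2) else 0)"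
  proof (intro sum.cong refl)
    fix v w assume vw: "v \<in> V" "w \<in> V"
    show "(\<Sum>P\<in>PiE V (\<lambda>_. R). (\<Prod>u\<in>V. pc (P u)) * (h (P v) * h (P w))) =
          (if w = v then (\<Sum>y\<in>R. pc y * (h y)^2) else 0)"
    proof (cases "w = v")
      case True
      then show ?thesis using sum_PiE_single[OF assms(1,2) vw(1) assms(3), of "\<lambda>y. (h y)^2"]
        by (simp add: power2_eq_square)
    next
      case False
      then show ?thesis using sum_PiE_pair[OF assms(1,2) vw _ assms(3), of h h] assms(4) by simp
    qed
  qed
  also have "\<dots> = real (card V) * (\<Sum>y\<in>R. pc y * (h y)^2)"
    using assms by simp
  finally show ?thesis .
qed


lemma rankings_perm: "rankings m = permutations_of_set {1..m}"
  by (auto simp: rankings_def permutations_of_set_def)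

lemma finite_rankings: "finite (rankings m)"
  by (simp add: rankings_perm)

lemma card_rankings: "card (rankings m) = fact m"
  by (simp add: rankings_perm)

lemma dweights_sum: "dweights n P p = (\<Sum>v\<in>{1..n}. of_bool (P v = p))"
proof -
  have "{v\<in>{1..n}. P v = p} = {1..n} \<inter> {v. P v = p}" by auto
  then show ?thesis by (simp add: dweights_def)
qed

lemma sum_of_bool_mem: "finite S \<Longrightarrow> (\<Sum>r\<in>S. (of_bool (x = r) :: real)) = of_bool (x \<in> S)"
  by (simp add: of_bool_def sum.delta)

lemma dprofile_in: "P \<in> dprofiles m n \<Longrightarrow> v \<in> {1..n} \<Longrightarrow> P v \<in> rankings m"
  by (auto simp: dprofiles_def PiE_iff)

lemma dweights_total: assumes "P \<in> dprofiles m n" shows "total_weight m (dweights n P) = real n"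
proof -
  have "total_weight m (dweights n P) = (\<Sum>v\<in>{1..n}. \<Sum>p\<in>rankings m. (of_bool (P v = p) :: real))"
    unfolding total_weight_def dweights_sum by (rule sum.swap)
  also have "\<dots> = (\<Sum>v\<in>{1..n}. 1)"
    using dprofile_in[OF assms] by (intro sum.cong refl) (simp add: sum_of_bool_mem finite_rankings)
  finally show ?thesis by simp
qed

lemma dweights_outside: assumes "P \<in> dprofiles m n" "p \<notin> rankings m" shows "dweights n P p = 0"
  using dprofile_in[OF assms(1)] assms(2) unfolding dweights_sum by (intro sum.neutral) auto

lemma dweights_cprofile: assumes "P \<in> dprofiles m n" "n \<ge> 1" shows "cprofile m (dweights n P)"
  using dweights_total[OF assms(1)] dweights_outside[OF assms(1)] assms(2)
  by (auto simp: cprofile_def dweights_def)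

lemma unison_move_total:
  assumes "q \<in> rankings m"
  shows "total_weight m (unison_move m w b c q) = total_weight m w"
proof -
  let ?R = "rankings m"
  let ?A = "{r\<in>?R. prefers r c b}"
  have fin: "finite ?R" by (simp add: finite_rankings)
  have "total_weight m (unison_move m w b c q) =
     (\<Sum>p\<in>?R. (if prefers p c b then 0 else w p)) + (\<Sum>p\<in>?R. (if p = q then sum w ?A else 0))"
    unfolding total_weight_def unison_move_def by (simp add: sum.distrib)
  also have "(\<Sum>p\<in>?R. (if p = q then sum w ?A else 0)) = sum w ?A"
    using fin assms by (simp add: sum.delta')
  also have "(\<Sum>p\<in>?R. (if prefers p c b then 0 else w p)) = sum w {r\<in>?R. \<not> prefers r c b}"
    using fin by (intro sum.mono_neutral_cong_right) auto
  also have "sum w {r\<in>?R. \<not> prefers r c b} + sum w ?A = sum w ({r\<in>?R. \<not> prefers r c b} \<union> ?A)"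
    using fin by (intro sum.union_disjoint[symmetric]) auto
  also have "{r\<in>?R. \<not> prefers r c b} \<union> ?A = ?R" by auto
  finally show ?thesis by (simp add: total_weight_def)
qed

lemma dweights_Q:
  fixes b c :: nat
  assumes P: "P \<in> dprofiles m n" and q: "q \<in> rankings m"
  defines "Q \<equiv> (\<lambda>v. if v \<in> {1..n} \<and> prefers (P v) c b then q else P v)"
  shows "dweights n Q = unison_move m (dweights n P) b c q"
proof
  fix p
  let ?R = "rankings m"
  let ?pr = "\<lambda>r. prefers r c b"
  have fin: "finite ?R" by (simp add: finite_rankings)
  have "dweights n Q p = (\<Sum>v\<in>{1..n}. of_bool (?pr (P v)) * of_bool (q = p) + of_bool (\<not> ?pr (P v) \<and> P v = p))"
    unfolding dweights_sum by (intro sum.cong refl) (auto simp: Q_def)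
  also have "\<dots> = (\<Sum>v\<in>{1..n}. of_bool (?pr (P v))) * of_bool (q = p) + (\<Sum>v\<in>{1..n}. of_bool (\<not> ?pr (P v) \<and> P v = p))"
    by (simp add: sum.distrib sum_distrib_right)
  also have "(\<Sum>v\<in>{1..n}. of_bool (\<not> ?pr (P v) \<and> P v = p)) = (\<Sum>v\<in>{1..n}. of_bool (\<not> ?pr p) * (of_bool (P v = p) :: real))"
    by (intro sum.cong refl) auto
  also have "\<dots> = (if ?pr p then 0 else dweights n P p)"
    unfolding dweights_sum by (simp add: sum_distrib_left[symmetric] del: sum_of_bool_eq)
  also have "(\<Sum>v\<in>{1..n}. (of_bool (?pr (P v)) :: real)) = (\<Sum>r\<in>{r\<in>?R. ?pr r}. dweights n P r)"
  proof -
    have "(\<Sum>r\<in>{r\<in>?R. ?pr r}. dweights n P r) = (\<Sum>v\<in>{1..n}. \<Sum>r\<in>{r\<in>?R. ?pr r}. (of_bool (P v = r) :: real))"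
      unfolding dweights_sum by (rule sum.swap)
    also have "\<dots> = (\<Sum>v\<in>{1..n}. of_bool (?pr (P v)))"
      using dprofile_in[OF P] fin by (intro sum.cong refl) (auto simp: sum_of_bool_mem)
    finally show ?thesis by simp
  qed
  finally show "dweights n Q p = unison_move m (dweights n P) b c q p"
    by (simp add: unison_move_def)
qed

lemma near_CM:
  assumes hom: "homogeneous m f" and P: "P \<in> dprofiles m n" and n: "n \<ge> 1"
    and UMh: "\<forall>w. normalized_profile m w \<and> (\<forall>p\<in>rankings m. \<bar>w p - hatP m \<theta> p\<bar> < \<epsilon>) \<longrightarrow> UM m f w"
    and near: "\<forall>p\<in>rankings m. \<bar>dweights n P p / n - pc_prob m \<theta> p\<bar> < \<epsilon>"
  shows "CM m n f P"
proof -
  define W where "W = dweights n P"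
  define Wn where "Wn = normalize m W"
  have cW: "cprofile m W" unfolding W_def by (rule dweights_cprofile[OF P n])
  have tW: "total_weight m W = n" unfolding W_def by (rule dweights_total[OF P])
  have Wn_eq: "Wn = (\<lambda>p. W p / n)" unfolding Wn_def normalize_def tW ..
  have "normalized_profile m Wn"
    using cW tW n unfolding normalized_profile_def cprofile_def Wn_eq total_weight_def
    by (auto simp: sum_divide_distrib[symmetric])
  moreover have "\<forall>p\<in>rankings m. \<bar>Wn p - hatP m \<theta> p\<bar> < \<epsilon>"
    using near unfolding Wn_eq W_def by (auto simp: hatP_def pc_prob_def)
  ultimately have "UM m f Wn" using UMh by blast
  define b where "b = f W"
  have fWn: "f Wn = b" using hom cW unfolding homogeneous_def b_def Wn_def by metis
  obtain c q where c: "c \<in> {1..m}" and q: "q \<in> rankings m" and cb: "c \<noteq> b"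
    and fc: "f (unison_move m Wn b c q) = c"
    using \<open>UM m f Wn\<close> unfolding UM_def fWn by blast
  define Q where "Q = (\<lambda>v. if v \<in> {1..n} \<and> prefers (P v) c b then q else P v)"
  have Q: "Q \<in> dprofiles m n"
    using P q unfolding dprofiles_def Q_def by (auto simp: PiE_iff extensional_def)
  have dQ: "dweights n Q = unison_move m W b c q"
    unfolding Q_def W_def by (rule dweights_Q[OF P q])
  have tQ: "total_weight m (dweights n Q) = n" by (rule dweights_total[OF Q])
  have "normalize m (dweights n Q) = unison_move m Wn b c q"
    using tQ unfolding dQ normalize_def Wn_eq
    apply (simp only:)
    unfolding unison_move_def
    by (auto simp: sum_divide_distrib[symmetric] add_divide_distrib)
  moreover have "f (dweights n Q) = f (normalize m (dweights n Q))"
    using hom dweights_cprofile[OF Q n] unfolding homogeneous_def by blast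
  ultimately have fQ: "f (dweights n Q) = c" using fc by simp
  show ?thesis unfolding CM_def
  proof (intro bexI[OF _ Q] conjI ballI impI)
    show "f (dweights n Q) \<noteq> f (dweights n P)" using fQ cb b_def W_def by simp
  next
    fix v assume "v \<in> {1..n}" "Q v \<noteq> P v"
    then show "prefers (P v) (f (dweights n Q)) (f (dweights n P))"
      using fQ b_def W_def by (auto simp: Q_def split: if_splits)
  qed
qed


lemma rate_bounds:
  fixes m :: nat and \<theta> \<epsilon> :: real and f :: "(nat list \<Rightarrow> real) \<Rightarrow> nat"
  assumes "0 < \<theta>" and "\<theta> \<le> 1" and hom: "homogeneous m f" and \<epsilon>: "\<epsilon> > 0"
    and UMh: "\<forall>w. normalized_profile m w \<and> (\<forall>p\<in>rankings m. \<bar>w p - hatP m \<theta> p\<bar> < \<epsilon>) \<longrightarrow> UM m f w"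
    and n: "n \<ge> 1"
  shows "1 - fact m / (real n * \<epsilon>^2) \<le> CM_rate f m n \<theta> \<and> CM_rate f m n \<theta> \<le> 1"
proof -
  define R where "R = rankings m"
  define pc where "pc = pc_prob m \<theta>"
  have fin: "finite R" by (simp add: R_def finite_rankings)
  have fm: "(fact m :: real) > 0" by simp
  have pc_nn: "pc y \<ge> 0" for y using assms fm by (simp add: pc_def pc_prob_def)
  have id_in: "identity_ranking m \<in> R"
    by (auto simp: R_def rankings_def identity_ranking_def)
  have sum1: "sum pc R = 1"
  proof -
    have "sum pc R = (\<Sum>p\<in>R. (if p = identity_ranking m then \<theta> else 0)) + real (card R) * ((1 - \<theta>) / fact m)"
      by (simp add: pc_def pc_prob_def sum.distrib)
    also have "\<dots> = 1" using fin id_in fm by (simp add: R_def card_rankings)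
    finally show ?thesis .
  qed
  have pc_le: "p \<in> R \<Longrightarrow> pc p \<le> 1" for p
    using member_le_sum[of p R pc] fin pc_nn sum1 by simp
  define h where "h p y = (of_bool (y = p) :: real) - pc p" for p y
  have hmean: "(\<Sum>y\<in>R. pc y * h p y) = 0" if "p \<in> R" for p
  proof -
    have "(\<Sum>y\<in>R. pc y * h p y) = (\<Sum>y\<in>R. pc y * of_bool (y = p)) - pc p * sum pc R"
      by (simp add: h_def algebra_simps sum_subtractf sum_distrib_left)
    also have "(\<Sum>y\<in>R. pc y * of_bool (y = p)) = pc p"
      using fin that by (simp add: of_bool_def sum.delta' if_distrib cong: if_cong)
    finally show ?thesis using sum1 by simp
  qed
  have hsq: "(\<Sum>y\<in>R. pc y * (h p y)^2) \<le> 1" if "p \<in> R" for p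
  proof -
    have "(\<Sum>y\<in>R. pc y * (h p y)^2) \<le> (\<Sum>y\<in>R. pc y)"
    proof (rule sum_mono)
      fix y assume "y \<in> R"
      have "\<bar>h p y\<bar> \<le> 1" using pc_nn[of p] pc_le[OF that] by (auto simp: h_def)
      hence "(h p y)^2 \<le> 1" by (simp add: abs_square_le_1)
      thus "pc y * (h p y)^2 \<le> pc y" using pc_nn[of y] by (simp add: mult_left_le)
    qed
    thus ?thesis using sum1 by simp
  qed
  define D where "D = dprofiles m n"
  have D_eq: "D = PiE {1..n} (\<lambda>_. R)" by (simp add: D_def dprofiles_def R_def)
  have finD: "finite D" unfolding D_eq using fin by (simp add: finite_PiE)
  define wt where "wt P = (\<Prod>v\<in>{1..n}. pc (P v))" for P :: "nat \<Rightarrow> nat list"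
  have wt_nn: "wt P \<ge> 0" for P unfolding wt_def using pc_nn by (simp add: prod_nonneg)
  have tot: "sum wt D = 1"
    using sum_PiE_single[of "{1..n}" R 1 pc "\<lambda>_. 1"] fin n sum1 by (simp add: D_eq wt_def)
  have rate: "CM_rate f m n \<theta> = sum wt {P\<in>D. CM m n f P}"
    by (simp add: CM_rate_def D_def wt_def pc_def)
  have le1: "CM_rate f m n \<theta> \<le> 1"
    unfolding rate using sum_mono2[OF finD, of "{P\<in>D. CM m n f P}" wt] wt_nn tot by auto
  have "1 - CM_rate f m n \<theta> = (\<Sum>P\<in>D. wt P * of_bool (\<not> CM m n f P))"
  proof -
    have "sum wt {P\<in>D. CM m n f P} = (\<Sum>P\<in>D. wt P * of_bool (CM m n f P))"
      using finD by (simp add: sum.inter_filter of_bool_def if_distrib cong: if_cong)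
    moreover have "(\<Sum>P\<in>D. wt P * of_bool (CM m n f P)) + (\<Sum>P\<in>D. wt P * of_bool (\<not> CM m n f P)) = sum wt D"
    proof -
      have eqP: "wt P * of_bool (CM m n f P) + wt P * of_bool (\<not> CM m n f P) = wt P" for P
        by (cases "CM m n f P") simp_all
      show ?thesis by (simp only: sum.distrib[symmetric] eqP)
    qed
    ultimately show ?thesis using tot rate by simp
  qed
  also have "\<dots> \<le> (\<Sum>P\<in>D. wt P * (\<Sum>p\<in>R. (\<Sum>v\<in>{1..n}. h p (P v))^2 / (real n * \<epsilon>)^2))"
  proof (rule sum_mono)
    fix P assume P: "P \<in> D"
    have nn: "0 \<le> (\<Sum>p\<in>R. (\<Sum>v\<in>{1..n}. h p (P v))^2 / (real n * \<epsilon>)^2)"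
      by (intro sum_nonneg) simp
    have "of_bool (\<not> CM m n f P) \<le> (\<Sum>p\<in>R. (\<Sum>v\<in>{1..n}. h p (P v))^2 / (real n * \<epsilon>)^2)"
    proof (cases "CM m n f P")
      case True thus ?thesis using nn by simp
    next
      case False
      then obtain p where p: "p \<in> R" and far: "\<not> \<bar>dweights n P p / n - pc p\<bar> < \<epsilon>"
        using near_CM[OF hom P[unfolded D_def] n UMh] by (auto simp: R_def pc_def)
      have hs: "(\<Sum>v\<in>{1..n}. h p (P v)) = dweights n P p - n * pc p"
        by (simp add: h_def sum_subtractf dweights_sum)
      have npos: "real n > 0" using n by simp
      have "\<bar>dweights n P p - n * pc p\<bar> = n * \<bar>dweights n P p / n - pc p\<bar>"
        using npos by (simp add: field_simps abs_mult[symmetric])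
      also have "\<dots> \<ge> n * \<epsilon>" using far npos by simp
      finally have "(real n * \<epsilon>)^2 \<le> (\<Sum>v\<in>{1..n}. h p (P v))^2"
        unfolding hs using \<epsilon> npos by (simp add: abs_le_square_iff[symmetric])
      hence "1 \<le> (\<Sum>v\<in>{1..n}. h p (P v))^2 / (real n * \<epsilon>)^2"
        using \<epsilon> npos by simp
      also have "\<dots> \<le> (\<Sum>p\<in>R. (\<Sum>v\<in>{1..n}. h p (P v))^2 / (real n * \<epsilon>)^2)"
        using fin p by (intro member_le_sum) auto
      finally show ?thesis using False by simp
    qed
    thus "wt P * of_bool (\<not> CM m n f P) \<le> wt P * (\<Sum>p\<in>R. (\<Sum>v\<in>{1..n}. h p (P v))^2 / (real n * \<epsilon>)^2)"
      using wt_nn[of P] by (rule mult_left_mono)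
  qed
  also have "\<dots> = (\<Sum>p\<in>R. (\<Sum>P\<in>D. wt P * (\<Sum>v\<in>{1..n}. h p (P v))^2) / (real n * \<epsilon>)^2)"
    by (simp add: sum_distrib_left sum_divide_distrib sum.swap[of _ D])
  also have "\<dots> = (\<Sum>p\<in>R. real n * (\<Sum>y\<in>R. pc y * (h p y)^2) / (real n * \<epsilon>)^2)"
  proof (intro sum.cong refl)
    fix p assume "p \<in> R"
    show "(\<Sum>P\<in>D. wt P * (\<Sum>v\<in>{1..n}. h p (P v))^2) / (real n * \<epsilon>)^2 =
          real n * (\<Sum>y\<in>R. pc y * (h p y)^2) / (real n * \<epsilon>)^2"
      using sum_PiE_var[of "{1..n}" R pc "h p"] fin sum1 hmean[OF \<open>p \<in> R\<close>]
      by (simp add: D_eq wt_def)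
  qed
  also have "\<dots> \<le> (\<Sum>p\<in>R. real n * 1 / (real n * \<epsilon>)^2)"
    by (intro sum_mono divide_right_mono mult_left_mono hsq) auto
  also have "\<dots> = fact m / (real n * \<epsilon>^2)"
    using n by (simp add: R_def card_rankings power2_eq_square)
  finally show ?thesis using le1 by simp
qed

theorem lemma3p2:
  fixes m :: nat and \<theta> :: real and f :: "(nat list \<Rightarrow> real) \<Rightarrow> nat"
  assumes "m \<ge> 1" and "0 < \<theta>" and "\<theta> \<le> 1"
    and "voting_rule m f" and "homogeneous m f"
    and "\<exists>\<epsilon>>0. \<forall>w. normalized_profile m w \<and> (\<forall>p\<in>rankings m. \<bar>w p - hatP m \<theta> p\<bar> < \<epsilon>)
                \<longrightarrow> UM m f w"
  shows "(\<lambda>n. CM_rate f m n \<theta>) \<longlonglongrightarrow> 1"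
proof -
  obtain \<epsilon> where \<epsilon>: "\<epsilon> > 0" and UMh: "\<forall>w. normalized_profile m w \<and> (\<forall>p\<in>rankings m. \<bar>w p - hatP m \<theta> p\<bar> < \<epsilon>) \<longrightarrow> UM m f w"
    using assms(6) by blast
  define C where "C = (fact m :: real) / \<epsilon>^2"
  have lim: "(\<lambda>n. 1 - C / real n) \<longlonglongrightarrow> 1"
    using tendsto_diff[OF tendsto_const lim_const_over_n[of C]] by simp
  show ?thesis
  proof (rule tendsto_sandwich[OF _ _ lim tendsto_const])
    show "\<forall>\<^sub>F n in sequentially. 1 - C / real n \<le> CM_rate f m n \<theta>"
      using eventually_ge_at_top[of 1]
    proof (rule eventually_mono)
      fix n :: nat assume "n \<ge> 1"
      then show "1 - C / real n \<le> CM_rate f m n \<theta>"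
        using rate_bounds[OF assms(2,3,5) \<epsilon> UMh, of n] by (simp add: C_def field_simps)
    qed
    show "\<forall>\<^sub>F n in sequentially. CM_rate f m n \<theta> \<le> 1"
      using eventually_ge_at_top[of 1]
    proof (rule eventually_mono)
      fix n :: nat assume "n \<ge> 1"
      then show "CM_rate f m n \<theta> \<le> 1"
        using rate_bounds[OF assms(2,3,5) \<epsilon> UMh, of n] by simp
    qed
  qed
qed

end
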